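(* Let $(G,\mathcal{B}_1,\mathcal{B}_2)$ be a Rota-Baxter system of groups, with descendent operation $\circ$ and cocycle $\Phi$. Then $(G,\circ)$ is a group if and only if $\Phi:G\to G$ is bijective.
   Context: A Rota-Baxter system of groups is a triple $(G,\mathcal{B}_1,\mathcal{B}_2)$ where $G$ is a group and $\mathcal{B}_1,\mathcal{B}_2:G\to G$ are maps (not necessarily homomorphisms) such that for all $a,b\in G$: $\mathcal{B}_1(a)\mathcal{B}_1(b)=\mathcal{B}_1(\mathcal{B}_1(a)b\mathcal{B}_2(a))$ and $\mathcal{B}_2(b)\mathcal{B}_2(a)=\mathcal{B}_2(\mathcal{B}_1(a)b\mathcal{B}_2(a))$. The descendent operation is $a\circ b=\mathcal{B}_1(a)\,b\,\mathcal{B}_2(a)$, and the cocycle is $\Phi(a)=\mathcal{B}_1(a)\mathcal{B}_2(a)$. *)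

theory Defs
  imports "HOL-Algebra.Group"
begin

definition rota_baxter_system ::
  "('a, 'b) monoid_scheme \<Rightarrow> ('a \<Rightarrow> 'a) \<Rightarrow> ('a \<Rightarrow> 'a) \<Rightarrow> bool" where
  "rota_baxter_system G B1 B2 \<longleftrightarrow>
     group G \<and>
     B1 \<in> carrier G \<rightarrow> carrier G \<and> B2 \<in> carrier G \<rightarrow> carrier G \<and>
     (\<forall>a\<in>carrier G. \<forall>b\<in>carrier G.
        B1 a \<otimes>\<^bsub>G\<^esub> B1 b = B1 (B1 a \<otimes>\<^bsub>G\<^esub> b \<otimes>\<^bsub>G\<^esub> B2 a) \<and>
        B2 b \<otimes>\<^bsub>G\<^esub> B2 a = B2 (B1 a \<otimes>\<^bsub>G\<^esub> b \<otimes>\<^bsub>G\<^esub> B2 a))"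

definition descendent ::
  "('a, 'b) monoid_scheme \<Rightarrow> ('a \<Rightarrow> 'a) \<Rightarrow> ('a \<Rightarrow> 'a) \<Rightarrow> 'a \<Rightarrow> 'a \<Rightarrow> 'a" where
  "descendent G B1 B2 a b = B1 a \<otimes>\<^bsub>G\<^esub> b \<otimes>\<^bsub>G\<^esub> B2 a"

definition cocycle ::
  "('a, 'b) monoid_scheme \<Rightarrow> ('a \<Rightarrow> 'a) \<Rightarrow> ('a \<Rightarrow> 'a) \<Rightarrow> 'a \<Rightarrow> 'a" where
  "cocycle G B1 B2 a = B1 a \<otimes>\<^bsub>G\<^esub> B2 a"

definition descendent_monoid ::
  "('a, 'b) monoid_scheme \<Rightarrow> ('a \<Rightarrow> 'a) \<Rightarrow> ('a \<Rightarrow> 'a) \<Rightarrow> 'a \<Rightarrow> 'a monoid" where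
  "descendent_monoid G B1 B2 e =
     \<lparr>carrier = carrier G, mult = descendent G B1 B2, one = e\<rparr>"

end

theory Submission
  imports Defs
begin

lemma rbs_facts:
  assumes "rota_baxter_system G B1 B2"
  shows "group G" "\<And>a. a \<in> carrier G \<Longrightarrow> B1 a \<in> carrier G"
    "\<And>a. a \<in> carrier G \<Longrightarrow> B2 a \<in> carrier G"
    "\<And>a b. a \<in> carrier G \<Longrightarrow> b \<in> carrier G \<Longrightarrow>
        B1 (descendent G B1 B2 a b) = B1 a \<otimes>\<^bsub>G\<^esub> B1 b"
    "\<And>a b. a \<in> carrier G \<Longrightarrow> b \<in> carrier G \<Longrightarrow>
        B2 (descendent G B1 B2 a b) = B2 b \<otimes>\<^bsub>G\<^esub> B2 a"
  using assms unfolding rota_baxter_system_def descendent_def by (auto simp: Pi_def)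

lemma desc_closed:
  assumes "rota_baxter_system G B1 B2" "a \<in> carrier G" "b \<in> carrier G"
  shows "descendent G B1 B2 a b \<in> carrier G"
proof -
  interpret group G using rbs_facts(1)[OF assms(1)] .
  show ?thesis using assms rbs_facts[OF assms(1)] unfolding descendent_def by auto
qed

lemma desc_assoc:
  assumes "rota_baxter_system G B1 B2" "a \<in> carrier G" "b \<in> carrier G" "c \<in> carrier G"
  shows "descendent G B1 B2 (descendent G B1 B2 a b) c = descendent G B1 B2 a (descendent G B1 B2 b c)"
proof -
  interpret group G using rbs_facts(1)[OF assms(1)] .
  note f = rbs_facts[OF assms(1)]
  show ?thesis
    apply (subst descendent_def, simp only: f(4,5) assms)
    using assms f unfolding descendent_def by (simp add: m_assoc)
qed

lemma cocycle_desc: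
  assumes "rota_baxter_system G B1 B2" "a \<in> carrier G" "b \<in> carrier G"
  shows "cocycle G B1 B2 (descendent G B1 B2 a b) = descendent G B1 B2 a (cocycle G B1 B2 b)"
proof -
  interpret group G using rbs_facts(1)[OF assms(1)] .
  note f = rbs_facts[OF assms(1)]
  show ?thesis
    apply (subst cocycle_def, simp only: f(4,5) assms)
    using assms f unfolding descendent_def cocycle_def by (simp add: m_assoc)
qed

theorem theorem3p12:
  fixes G :: "('a, 'b) monoid_scheme" and B1 B2 :: "'a \<Rightarrow> 'a"
  assumes "rota_baxter_system G B1 B2"
  shows "(\<exists>e. group (descendent_monoid G B1 B2 e)) \<longleftrightarrow>
         bij_betw (cocycle G B1 B2) (carrier G) (carrier G)"
proof
  interpret G: group G using rbs_facts(1)[OF assms] .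
  note f = rbs_facts[OF assms]
  let ?d = "descendent G B1 B2"
  assume "\<exists>e. group (descendent_monoid G B1 B2 e)"
  then obtain e where ge: "group (descendent_monoid G B1 B2 e)" by blast
  let ?D = "descendent_monoid G B1 B2 e"
  interpret D: group ?D by (rule ge)
  have carr: "carrier ?D = carrier G" and mul: "\<And>x y. x \<otimes>\<^bsub>?D\<^esub> y = ?d x y"
    and one: "\<one>\<^bsub>?D\<^esub> = e"
    by (simp_all add: descendent_monoid_def)
  have eC: "e \<in> carrier G" using D.one_closed carr one by simp
  define c where "c = cocycle G B1 B2 e"
  have cC: "c \<in> carrier G" using eC f unfolding c_def cocycle_def by auto
  have phi: "cocycle G B1 B2 x = x \<otimes>\<^bsub>?D\<^esub> c" if "x \<in> carrier G" for x
  proof -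
    have "x = x \<otimes>\<^bsub>?D\<^esub> \<one>\<^bsub>?D\<^esub>" using D.r_one that carr by simp
    hence "x = ?d x e" using mul one by simp
    hence "cocycle G B1 B2 x = cocycle G B1 B2 (?d x e)" by simp
    also have "\<dots> = ?d x c" using cocycle_desc[OF assms that eC] c_def by simp
    finally show ?thesis using mul by simp
  qed
  show "bij_betw (cocycle G B1 B2) (carrier G) (carrier G)"
    unfolding bij_betw_def
  proof
    show "inj_on (cocycle G B1 B2) (carrier G)"
      by (rule inj_onI) (metis phi D.right_cancel cC carr)
    show "cocycle G B1 B2 ` carrier G = carrier G"
    proof
      show "cocycle G B1 B2 ` carrier G \<subseteq> carrier G"
        using phi cC carr D.m_closed by auto
    next
      show "carrier G \<subseteq> cocycle G B1 B2 ` carrier G"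
      proof
        fix y assume yC: "y \<in> carrier G"
        let ?x = "y \<otimes>\<^bsub>?D\<^esub> inv\<^bsub>?D\<^esub> c"
        have xC: "?x \<in> carrier G" using yC cC carr D.m_closed D.inv_closed by simp
        have "cocycle G B1 B2 ?x = y"
          proof -
          have yD: "y \<in> carrier ?D" and cD: "c \<in> carrier ?D" using yC cC carr by auto
          have "?x \<otimes>\<^bsub>?D\<^esub> c = y"
            using yD cD by (simp add: D.m_assoc D.l_inv)
          thus ?thesis using phi[OF xC] by simp
        qed
        thus "y \<in> cocycle G B1 B2 ` carrier G" using xC by force
      qed
    qed
  qed
next
  interpret G: group G using rbs_facts(1)[OF assms] .
  note f = rbs_facts[OF assms]
  let ?d = "descendent G B1 B2"
  assume bij: "bij_betw (cocycle G B1 B2) (carrier G) (carrier G)"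
  have dC: "\<And>a b. a \<in> carrier G \<Longrightarrow> b \<in> carrier G \<Longrightarrow> ?d a b \<in> carrier G"
    using desc_closed[OF assms] .
  have as: "\<And>a b c. a \<in> carrier G \<Longrightarrow> b \<in> carrier G \<Longrightarrow> c \<in> carrier G \<Longrightarrow>
      ?d (?d a b) c = ?d a (?d b c)" using desc_assoc[OF assms] .
  have solve: "\<exists>x\<in>carrier G. ?d a x = b" if "a \<in> carrier G" "b \<in> carrier G" for a b
  proof -
    let ?x = "inv\<^bsub>G\<^esub> (B1 a) \<otimes>\<^bsub>G\<^esub> b \<otimes>\<^bsub>G\<^esub> inv\<^bsub>G\<^esub> (B2 a)"
    have "?x \<in> carrier G" using that f by auto
    moreover have "?d a ?x = b" unfolding descendent_def using that f
      by (simp add: G.m_assoc [symmetric]) (simp add: G.m_assoc G.r_inv G.l_inv)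
    ultimately show ?thesis by blast
  qed
  have canc: "x = y" if "a \<in> carrier G" "x \<in> carrier G" "y \<in> carrier G" "?d a x = ?d a y" for a x y
    using that f unfolding descendent_def by (simp add: G.m_assoc)
  obtain e where eC: "e \<in> carrier G" and ee: "?d \<one>\<^bsub>G\<^esub> e = \<one>\<^bsub>G\<^esub>"
    using solve[of "\<one>\<^bsub>G\<^esub>" "\<one>\<^bsub>G\<^esub>"] by auto
  have eid: "?d e e = e"
  proof -
    have "?d \<one>\<^bsub>G\<^esub> (?d e e) = ?d \<one>\<^bsub>G\<^esub> e" using as[of "\<one>\<^bsub>G\<^esub>" e e] eC ee by simp
    thus ?thesis using canc[of "\<one>\<^bsub>G\<^esub>"] eC dC by blast
  qed
  have lone: "?d e x = x" if "x \<in> carrier G" for x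
  proof -
    have "?d e (?d e x) = ?d e x" using as[of e e x] eC that eid by simp
    thus ?thesis using canc[of e] eC dC that by blast
  qed
  have phie: "cocycle G B1 B2 e = \<one>\<^bsub>G\<^esub>"
    using lone[of "\<one>\<^bsub>G\<^esub>"] unfolding descendent_def cocycle_def using eC f by simp
  have rone: "?d x e = x" if "x \<in> carrier G" for x
  proof -
    have "cocycle G B1 B2 (?d x e) = ?d x \<one>\<^bsub>G\<^esub>"
      using cocycle_desc[OF assms that eC] phie by simp
    also have "\<dots> = cocycle G B1 B2 x" unfolding descendent_def cocycle_def using that f by simp
    finally show ?thesis using bij dC[OF that eC] that unfolding bij_betw_def inj_on_def by blast
  qed
  have linv: "\<exists>y\<in>carrier G. ?d y x = e" if xC: "x \<in> carrier G" for x
  proof -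
    obtain y where yC: "y \<in> carrier G" and xy: "?d x y = e" using solve[OF xC eC] by blast
    obtain z where zC: "z \<in> carrier G" and yz: "?d y z = e" using solve[OF yC eC] by blast
    have "x = ?d x (?d y z)" using yz rone xC by simp
    also have "\<dots> = z" using as[OF xC yC zC] xy lone zC by simp
    finally show ?thesis using yC yz by blast
  qed
  have "group (descendent_monoid G B1 B2 e)"
    by (rule groupI) (auto simp: descendent_monoid_def dC as eC lone linv)
  thus "\<exists>e. group (descendent_monoid G B1 B2 e)" by blast
qed

end
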